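(* Let $\mathbf{M}$ be the canonical adjacency matrix of a connected graph $G$ on $n\ge 2$ vertices. Then the $(n-1)\times(n-1)$ matrix obtained from $\mathbf{M}$ by deleting its last row and last column is the canonical adjacency matrix of a connected graph (namely the subgraph of $G$ induced by all vertices but the last one in the ordering of $\mathbf{M}$). In particular, the vertex corresponding to the last row/column of $\mathbf{M}$ is not a cut vertex of $G$.
   Context: For an $n\times n$ adjacency matrix $\mathbf{M}$ of a finite simple graph (with respect to some ordering of its vertices), its bit-string is obtained by concatenating the entries strictly above the diagonal column by column, left to right, reading each column from top to bottom. The canonical adjacency matrix of a graph $G$ is the unique adjacency matrix of $G$ (over all orderings of its vertices) whose bit-string is lexicographically greatest. It is known that deleting the last row and column of a canonical adjacency matrix of $G$ yields the canonical adjacency matrix of the corresponding induced subgraph. *)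

theory Defs
  imports Main
begin

definition simple_graph :: "'a set \<Rightarrow> ('a \<Rightarrow> 'a \<Rightarrow> bool) \<Rightarrow> bool" where
  "simple_graph V E \<longleftrightarrow> finite V \<and> (\<forall>x y. E x y \<longrightarrow> x \<in> V \<and> y \<in> V)
     \<and> (\<forall>x y. E x y \<longrightarrow> E y x) \<and> (\<forall>x. \<not> E x x)"

definition induced :: "('a \<Rightarrow> 'a \<Rightarrow> bool) \<Rightarrow> 'a set \<Rightarrow> 'a \<Rightarrow> 'a \<Rightarrow> bool" where
  "induced E W = (\<lambda>x y. E x y \<and> x \<in> W \<and> y \<in> W)"

definition reachable :: "'a set \<Rightarrow> ('a \<Rightarrow> 'a \<Rightarrow> bool) \<Rightarrow> 'a \<Rightarrow> 'a \<Rightarrow> bool" where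
  "reachable V E u w \<longleftrightarrow> (\<lambda>x y. x \<in> V \<and> y \<in> V \<and> E x y)\<^sup>*\<^sup>* u w"

definition connected_graph :: "'a set \<Rightarrow> ('a \<Rightarrow> 'a \<Rightarrow> bool) \<Rightarrow> bool" where
  "connected_graph V E \<longleftrightarrow> V \<noteq> {} \<and> (\<forall>u\<in>V. \<forall>w\<in>V. reachable V E u w)"

definition cut_vertex :: "'a set \<Rightarrow> ('a \<Rightarrow> 'a \<Rightarrow> bool) \<Rightarrow> 'a \<Rightarrow> bool" where
  "cut_vertex V E v \<longleftrightarrow> v \<in> V \<and> (\<exists>u\<in>V - {v}. \<exists>w\<in>V - {v}.
      reachable V E u w \<and> \<not> reachable (V - {v}) (induced E (V - {v})) u w)"

text \<open>n x n matrices over {0,1} as functions nat => nat => bool (True = 1),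
only entries with indices < n are meaningful.\<close>
type_synonym bmat = "nat \<Rightarrow> nat \<Rightarrow> bool"

definition adj_matrix_of :: "'a set \<Rightarrow> ('a \<Rightarrow> 'a \<Rightarrow> bool) \<Rightarrow> 'a list \<Rightarrow> bmat \<Rightarrow> bool" where
  "adj_matrix_of V E xs M \<longleftrightarrow> distinct xs \<and> set xs = V \<and>
     (\<forall>i<length xs. \<forall>j<length xs. M i j = E (xs ! i) (xs ! j))"

definition is_adj_matrix :: "'a set \<Rightarrow> ('a \<Rightarrow> 'a \<Rightarrow> bool) \<Rightarrow> nat \<Rightarrow> bmat \<Rightarrow> bool" where
  "is_adj_matrix V E n M \<longleftrightarrow> (\<exists>xs. length xs = n \<and> adj_matrix_of V E xs M)"

definition bitstring :: "nat \<Rightarrow> bmat \<Rightarrow> bool list" where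
  "bitstring n M = concat (map (\<lambda>j. map (\<lambda>i. M i j) [0..<j]) [0..<n])"

definition lex_le :: "bool list \<Rightarrow> bool list \<Rightarrow> bool" where
  "lex_le xs ys \<longleftrightarrow> xs = ys \<or> (xs, ys) \<in> lexord {(a, b). a < b}"

definition canonical_adj_matrix :: "'a set \<Rightarrow> ('a \<Rightarrow> 'a \<Rightarrow> bool) \<Rightarrow> nat \<Rightarrow> bmat \<Rightarrow> bool" where
  "canonical_adj_matrix V E n M \<longleftrightarrow> is_adj_matrix V E n M \<and>
     (\<forall>M'. is_adj_matrix V E n M' \<longrightarrow> lex_le (bitstring n M') (bitstring n M))"

end

theory Submission
  imports Defs
begin
lemma bitstring_cong:
  assumes "\<And>i j. i < j \<Longrightarrow> j < n \<Longrightarrow> M i j = M' i j"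
  shows "bitstring n M = bitstring n M'"
  unfolding bitstring_def using assms by (auto intro!: arg_cong[where f=concat] map_cong)

lemma bitstring_Suc: "bitstring (Suc n) M = bitstring n M @ map (\<lambda>i. M i n) [0..<n]"
  by (simp add: bitstring_def)

lemma bitstring_len: "length (bitstring n M) = length (bitstring n M')"
  by (simp add: bitstring_def length_concat comp_def)

lemma bitstring_split:
  assumes "j < n"
  shows "\<exists>r. bitstring n M = bitstring j M @ map (\<lambda>i. M i j) [0..<j] @ r"
proof -
  have "[0..<n] = [0..<j] @ [j..<n]" using assms upt_add_eq_append[of 0 j "n-j"] by simp
  also have "[j..<n] = j # [Suc j..<n]" using assms by (simp add: upt_conv_Cons)
  finally have "[0..<n] = [0..<j] @ j # [Suc j..<n]" .
  then show ?thesis by (simp add: bitstring_def)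
qed

lemma lexord_app_eq_len:
  assumes "(x, y) \<in> lexord r" "length x = length y"
  shows "(x @ u, y @ v) \<in> lexord r"
proof -
  from assms(1) consider (a) a w where "y = x @ a # w"
    | (b) p a b q w where "(a,b) \<in> r" "x = p @ a # q" "y = p @ b # w"
    unfolding lexord_def by blast
  then show ?thesis
  proof cases
    case a then show ?thesis using assms(2) by simp
  next
    case b
    then have "x @ u = p @ a # (q @ u)" "y @ v = p @ b # (w @ v)" by simp_all
    then show ?thesis using b(1) unfolding lexord_def by blast
  qed
qed

lemma lexord_zeros:
  assumes "length c = length d" "\<forall>x\<in>set c. \<not> x" "True \<in> set d"
  shows "(P @ c @ r1, P @ d @ r2) \<in> lexord {(a,b). a < b}"
proof -
  obtain ys d' where d: "d = ys @ True # d'" "True \<notin> set ys"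
    using split_list_first[OF assms(3)] by blast
  have ys: "ys = replicate (length ys) False"
    using d(2) by (metis (full_types) replicate_length_same)
  define a where "a = length ys"
  have la: "length c = a + Suc (length d')" using assms(1) d(1) a_def by simp
  have "c = replicate (length c) False"
    using assms(2) by (metis (full_types) replicate_length_same)
  also have "\<dots> = replicate a False @ False # replicate (length d') False"
    unfolding la by (simp only: replicate_add replicate_Suc)
  finally have c: "c = replicate a False @ False # replicate (length d') False" .
  have "P @ c @ r1 = (P @ replicate a False) @ False # (replicate (length d') False @ r1)"
    using c by simp
  moreover have "P @ d @ r2 = (P @ replicate a False) @ True # (d' @ r2)"
    using d ys a_def by simp
  moreover have "(False, True) \<in> {(a::bool,b). a < b}" by simp
  ultimately show ?thesis unfolding lexord_def by blast
qed

lemma lex_strict_contra: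
  assumes "(x,y) \<in> lexord {(a::bool,b). a<b}" "lex_le y x" shows False
proof -
  have irr: "(z,z) \<notin> lexord {(a::bool,b). a<b}" for z
    by (rule lexord_irreflexive) auto
  have tr: "trans {(a::bool,b). a<b}" by (auto simp: trans_def)
  from assms(2) show False unfolding lex_le_def
    using irr assms(1) lexord_trans[OF assms(1) _ tr] by blast
qed

lemma cross:
  assumes "R\<^sup>*\<^sup>* u w" "u \<in> S" "w \<notin> S" shows "\<exists>x y. R x y \<and> x \<in> S \<and> y \<notin> S"
  using assms by (induction rule: rtranclp_induct) auto

lemma sym_rtranclp:
  assumes "\<And>x y. R x y \<Longrightarrow> R y x" "R\<^sup>*\<^sup>* u w" shows "R\<^sup>*\<^sup>* w u"
  using assms(2) by (induction rule: rtranclp_induct)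
    (auto intro: converse_rtranclp_into_rtranclp assms(1))
theorem mainTheorem7:
  fixes V :: "'a set" and E :: "'a \<Rightarrow> 'a \<Rightarrow> bool" and n :: nat and M :: bmat
    and xs :: "'a list"
  assumes "simple_graph V E"
    and "connected_graph V E"
    and "n \<ge> 2"
    and "canonical_adj_matrix V E n M"
    and "length xs = n" and "adj_matrix_of V E xs M"
  shows "canonical_adj_matrix (set (butlast xs)) (induced E (set (butlast xs))) (n - 1) M
       \<and> connected_graph (set (butlast xs)) (induced E (set (butlast xs)))
       \<and> \<not> cut_vertex V E (last xs)"
proof -
  have symE: "\<And>x y. E x y \<Longrightarrow> E y x" and EV: "\<And>x y. E x y \<Longrightarrow> x \<in> V \<and> y \<in> V"
    using assms(1) unfolding simple_graph_def by blast+
  have dist: "distinct xs" and setx: "set xs = V"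
    and Mx: "\<And>i j. i < n \<Longrightarrow> j < n \<Longrightarrow> M i j = E (xs!i) (xs!j)"
    using assms(5,6) unfolding adj_matrix_of_def by auto
  have canon: "\<And>M'. is_adj_matrix V E n M' \<Longrightarrow> lex_le (bitstring n M') (bitstring n M)"
    using assms(4) unfolding canonical_adj_matrix_def by blast
  have conn: "\<And>u w. u \<in> V \<Longrightarrow> w \<in> V \<Longrightarrow> reachable V E u w"
    using assms(2) unfolding connected_graph_def by blast
  define W where "W = set (butlast xs)"
  have xne: "xs \<noteq> []" using assms(3,5) by auto
  have xsplit: "xs = butlast xs @ [last xs]" using xne by simp
  have distb: "distinct (butlast xs)" using dist by (simp add: distinct_butlast)
  have d2: "distinct (butlast xs @ [last xs])" using dist xsplit by metis
  have lastW: "last xs \<notin> W" using d2 unfolding W_def by simp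
  have s2: "set xs = set (butlast xs @ [last xs])" using xsplit by metis
  have VW: "V = insert (last xs) W" using setx s2 unfolding W_def by simp
  have WV: "W = V - {last xs}" using VW lastW by auto
  have lenb: "length (butlast xs) = n - 1" using assms(5) by simp
  have nthb: "\<And>i. i < n - 1 \<Longrightarrow> butlast xs ! i = xs ! i"
    using lenb by (simp add: nth_butlast)
  have nW: "\<And>i. i < n - 1 \<Longrightarrow> xs ! i \<in> W"
    using nthb lenb unfolding W_def by (metis nth_mem)
  have claim: "\<exists>i<j. E (xs!i) (xs!j)" if j0: "0 < j" and jn: "j < n" for j
  proof (rule ccontr)
    assume nc: "\<not> (\<exists>i<j. E (xs!i) (xs!j))"
    let ?S = "set (take j xs)"
    have t0: "take j xs ! 0 = xs ! 0" "0 < length (take j xs)" using j0 jn assms(5) by simp_all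
    have x0: "xs!0 \<in> ?S" using nth_mem[OF t0(2)] t0(1) by simp
    have xj: "xs!j \<notin> ?S"
    proof
      assume "xs!j \<in> ?S"
      then obtain i where "i < length (take j xs)" "take j xs ! i = xs ! j"
        by (metis in_set_conv_nth)
      then have "i < j" "xs ! i = xs ! j" by auto
      then show False using dist jn assms(5) by (simp add: nth_eq_iff_index_eq)
    qed
    have "reachable V E (xs!0) (xs!j)" using conn j0 jn assms(5) setx nth_mem by (metis less_trans)
    then obtain x y where xy: "x \<in> V" "y \<in> V" "E x y" "x \<in> ?S" "y \<notin> ?S"
      unfolding reachable_def using cross[OF _ x0 xj] by blast
    from xy(4) obtain i where i0: "i < length (take j xs)" "x = take j xs ! i"
      unfolding in_set_conv_nth by blast
    then have i: "i < j" "x = xs ! i" by auto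
    have "y \<in> set xs" using xy(2) setx by simp
    then obtain k where k0: "k < length xs" "y = xs ! k"
      unfolding in_set_conv_nth by auto
    then have k: "k < n" "y = xs ! k" using assms(5) by simp_all
    have "\<not> k < j"
    proof
      assume "k < j"
      then have "take j xs ! k = xs ! k" "k < length (take j xs)" using k(1) assms(5) by simp_all
      then show False using nth_mem[of k "take j xs"] xy(5) k(2) by simp
    qed
    moreover have "k \<noteq> j"
    proof
      assume "k = j" then have "E (xs!i) (xs!j)" using i k xy(3) by simp
      then show False using nc i(1) by blast
    qed
    ultimately have jk: "j < k" by simp
    define zs where "zs = xs[j := xs!k, k := xs!j]"
    define M2 where "M2 = (\<lambda>a b. E (zs!a) (zs!b))"
    have "is_adj_matrix V E n M2"
      unfolding is_adj_matrix_def adj_matrix_of_def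
      apply (rule exI[of _ zs])
      using jk k(1) assms(5) dist setx unfolding zs_def M2_def by simp
    then have le: "lex_le (bitstring n M2) (bitstring n M)" by (rule canon)
    obtain r1 where r1: "bitstring n M = bitstring j M @ map (\<lambda>a. M a j) [0..<j] @ r1"
      using bitstring_split[OF jn] by blast
    obtain r2 where r2: "bitstring n M2 = bitstring j M2 @ map (\<lambda>a. M2 a j) [0..<j] @ r2"
      using bitstring_split[OF jn] by blast
    have zsa: "zs ! a = xs ! a" if "a < j" for a
      using that jk unfolding zs_def by simp
    have zsj: "zs ! j = xs ! k"
      using jk k(1) assms(5) unfolding zs_def by simp
    have "bitstring j M2 = bitstring j M"
    proof (rule bitstring_cong)
      fix a b assume "a < b" "b < j"
      then show "M2 a b = M a b" using jn by (simp add: M2_def zsa Mx)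
    qed
    moreover have "\<forall>x\<in>set (map (\<lambda>a. M a j) [0..<j]). \<not> x"
      using nc Mx jn by auto
    moreover have "True \<in> set (map (\<lambda>a. M2 a j) [0..<j])"
    proof -
      have "M2 i j" using i xy(3) zsa zsj k(2) unfolding M2_def by simp
      moreover have "i \<in> set [0..<j]" using i(1) by simp
      ultimately show ?thesis by (metis (full_types) image_eqI set_map)
    qed
    ultimately have "(bitstring n M, bitstring n M2) \<in> lexord {(a,b). a < b}"
      using r1 r2 lexord_zeros[of "map (\<lambda>a. M a j) [0..<j]" "map (\<lambda>a. M2 a j) [0..<j]"]
      by simp
    then show False using le by (rule lex_strict_contra)
  qed
  let ?R = "\<lambda>x y. x \<in> W \<and> y \<in> W \<and> induced E W x y"
  have reach0: "?R\<^sup>*\<^sup>* (xs!0) (xs!j)" if "j < n - 1" for j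
    using that
  proof (induction j rule: less_induct)
    case (less j)
    show ?case
    proof (cases "j = 0")
      case True then show ?thesis by simp
    next
      case False
      have "0 < j" "j < n" using False less.prems by simp_all
      then obtain i where i: "i < j" "E (xs!i) (xs!j)" using claim[of j] by blast
      have "?R\<^sup>*\<^sup>* (xs!0) (xs!i)" using less.IH i(1) less.prems by simp
      moreover have "?R (xs!i) (xs!j)" using i less.prems nW unfolding induced_def by simp
      ultimately show ?thesis by (rule rtranclp.rtrancl_into_rtrancl)
    qed
  qed
  have symR: "\<And>x y. ?R x y \<Longrightarrow> ?R y x" using symE unfolding induced_def by blast
  have connW: "connected_graph W (induced E W)"
    unfolding connected_graph_def reachable_def
  proof (intro conjI ballI)
    have "butlast xs \<noteq> []" using lenb assms(3) by (metis diff_is_0_eq length_0_conv not_numeral_le_zero le_diff_conv Suc_1 not_less_eq_eq plus_1_eq_Suc)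
    then show "W \<noteq> {}" unfolding W_def by simp
  next
    fix u w assume "u \<in> W" "w \<in> W"
    then obtain a b where ab: "a < n - 1" "u = xs ! a" "b < n - 1" "w = xs ! b"
      unfolding W_def in_set_conv_nth using lenb nthb by metis
    have "?R\<^sup>*\<^sup>* u (xs!0)" using sym_rtranclp[OF symR reach0[OF ab(1)]] ab(2) by simp
    also have "?R\<^sup>*\<^sup>* (xs!0) w" using reach0[OF ab(3)] ab(4) by simp
    finally show "?R\<^sup>*\<^sup>* u w" .
  qed
  have isW: "is_adj_matrix W (induced E W) (n - 1) M"
    unfolding is_adj_matrix_def adj_matrix_of_def
  proof (rule exI[of _ "butlast xs"], intro conjI allI impI)
    fix i j assume ij: "i < length (butlast xs)" "j < length (butlast xs)"
    then have "i < n - 1" "j < n - 1" using lenb by simp_all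
    then show "M i j = induced E W (butlast xs ! i) (butlast xs ! j)"
      using nthb nW Mx unfolding induced_def by simp
  qed (use lenb distb W_def in simp_all)
  have canW: "lex_le (bitstring (n-1) M') (bitstring (n-1) M)"
    if "is_adj_matrix W (induced E W) (n - 1) M'" for M'
  proof (rule ccontr)
    assume nle: "\<not> lex_le (bitstring (n-1) M') (bitstring (n-1) M)"
    have "\<forall>a b. (a, b) \<in> {(a::bool,b). a < b} \<or> a = b \<or> (b, a) \<in> {(a,b). a < b}" by auto
    from lexord_linear[OF this, of "bitstring (n-1) M'" "bitstring (n-1) M"] nle
    have gt: "(bitstring (n-1) M, bitstring (n-1) M') \<in> lexord {(a,b). a < b}"
      unfolding lex_le_def by blast
    from that obtain ys where ys0: "length ys = n - 1" "adj_matrix_of W (induced E W) ys M'"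
      unfolding is_adj_matrix_def by blast
    then have ys: "length ys = n - 1" "distinct ys" "set ys = W"
      "\<And>i j. i < n - 1 \<Longrightarrow> j < n - 1 \<Longrightarrow> M' i j = induced E W (ys!i) (ys!j)"
      unfolding adj_matrix_of_def by auto
    define zs where "zs = ys @ [last xs]"
    define M2 where "M2 = (\<lambda>a b. E (zs!a) (zs!b))"
    have "is_adj_matrix V E n M2"
      unfolding is_adj_matrix_def adj_matrix_of_def
    proof (rule exI[of _ zs], intro conjI allI impI)
      show "length zs = n" using ys(1) assms(3) unfolding zs_def by simp
      show "distinct zs" using ys(2,3) lastW unfolding zs_def by simp
      show "set zs = V" using ys(3) VW unfolding zs_def by simp
    qed (simp add: M2_def)
    then have le: "lex_le (bitstring n M2) (bitstring n M)" by (rule canon)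
    have nS: "n = Suc (n - 1)" using assms(3) by simp
    have b2: "bitstring (n-1) M2 = bitstring (n-1) M'"
    proof (rule bitstring_cong)
      fix a b assume ab: "a < b" "b < n - 1"
      then have "zs ! a = ys ! a" "zs ! b = ys ! b" using ys(1) unfolding zs_def by (simp_all add: nth_append)
      moreover have "ys ! a \<in> W" "ys ! b \<in> W" using ab ys(1,3) by (metis less_trans nth_mem)+
      ultimately show "M2 a b = M' a b" using ab ys(4)[of a b] unfolding M2_def induced_def by simp
    qed
    have "(bitstring (n-1) M @ map (\<lambda>i. M i (n-1)) [0..<n-1],
           bitstring (n-1) M2 @ map (\<lambda>i. M2 i (n-1)) [0..<n-1]) \<in> lexord {(a,b). a < b}"
      using lexord_app_eq_len[OF gt bitstring_len] b2 by simp
    then have "(bitstring n M, bitstring n M2) \<in> lexord {(a,b). a < b}"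
      using bitstring_Suc[of "n-1" M] bitstring_Suc[of "n-1" M2] nS by simp
    then show False using le by (rule lex_strict_contra)
  qed
  have canonW: "canonical_adj_matrix W (induced E W) (n - 1) M"
    unfolding canonical_adj_matrix_def using isW canW by blast
  have ncut: "\<not> cut_vertex V E (last xs)"
    unfolding cut_vertex_def using connW WV unfolding connected_graph_def by auto
  show ?thesis using canonW connW ncut unfolding W_def by blast
qed
end
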